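(* Let $(\mathcal{S},\mathcal{A},P)$ be a finite communicating MDP and $V^*(s,g)$ the negative minimum expected number of steps to reach $g$ from $s$ (so $V^*(g,g)=0$). Let $\epsilon_V,\epsilon_\psi,\epsilon_\pi,\epsilon_{drift}\ge0$, and assume: (a) $V_\omega:\mathcal{S}\times\mathcal{S}\to\mathbb{R}$ satisfies $|V_\omega(s,g)-V^*(s,g)|\le\epsilon_V$ for all $s,g$; (b) $\phi:\mathcal{S}\times\mathcal{S}\to\mathcal{S}$ satisfies $\max(0,V_\omega(s,g)-V_\omega(s,\hat s)-V_\omega(\hat s,g))\le\epsilon_\psi$ for all $s,g$, with $\hat s=\phi(s,g)$. Fix $s_0,s_g\in\mathcal{S}$ and an integer $M\ge1$. Let $s_0,s_1,\dots,s_M$ be random states (with $s_0$ deterministic) and $C_0,\dots,C_{M-1}$ random nonnegative costs such that, writing $\hat s_k=\phi(s_k,s_g)$, for each $0\le k<M$: (c) $\mathbb{E}[C_k\mid s_k]\le -V^*(s_k,\hat s_k)+\epsilon_\pi$; (d) $\big|\mathbb{E}[V^*(s_{k+1},s_g)\mid s_k]-V^*(\hat s_k,s_g)\big|\le\epsilon_{drift}$; and (e) $s_M=s_g$ almost surely. Then $$\mathbb{E}\Big[\sum_{k=0}^{M-1}C_k\Big]\le -V^*(s_0,s_g)+M\,(\epsilon_\pi+3\epsilon_V+\epsilon_\psi+\epsilon_{drift}).$$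
   Context: Interpretation: at high-level step $k$ the agent at state $s_k$ proposes the subgoal $\hat s_k=\phi(s_k,s_g)$ using an anticipation model $\phi$, then runs a low-level goal-conditioned policy toward $\hat s_k$; $C_k$ is the number of steps (cost) of that segment and $s_{k+1}$ is the (random) state where it ends. A finite MDP is communicating if for any two states $s_i,s_j$ some policy reaches $s_j$ from $s_i$ with nonzero probability. Reward is $-1$ per step, so $-V^*(s,g)$ is the minimum expected hitting time of $g$ from $s$. $V_\omega$ is a learned approximation of $V^*$. *)

theory Defs
  imports "HOL-Probability.Probability"
begin

text \<open>A (general, history-dependent,
  randomized) policy maps the history of visited states to a distribution on actions.\<close>

type_synonym ('s, 'a) kernel = "'s \<Rightarrow> 'a \<Rightarrow> 's pmf"
type_synonym ('s, 'a) policy = "'s list \<Rightarrow> 'a pmf"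

text \<open>Distribution of the state history (s_0,...,s_n) (a list of length n+1)
  when starting in s and following policy pol.\<close>
fun traj :: "('s, 'a) kernel \<Rightarrow> ('s, 'a) policy \<Rightarrow> 's \<Rightarrow> nat \<Rightarrow> 's list pmf" where
  "traj P pol s 0 = return_pmf [s]"
| "traj P pol s (Suc n) =
     bind_pmf (traj P pol s n)
       (\<lambda>h. bind_pmf (pol h) (\<lambda>a. map_pmf (\<lambda>s'. h @ [s']) (P (last h) a)))"

text \<open>Expected hitting time of g: E[T] = sum_{n>=0} Pr[T > n], with
  T = min{n. s_n = g}; may be infinite.\<close>
definition hit_time :: "('s, 'a) kernel \<Rightarrow> ('s, 'a) policy \<Rightarrow> 's \<Rightarrow> 's \<Rightarrow> ennreal" where
  "hit_time P pol s g = (\<Sum>n. ennreal (measure_pmf.prob (traj P pol s n) {h. g \<notin> set h}))"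

definition communicating :: "('s, 'a) kernel \<Rightarrow> bool" where
  "communicating P \<longleftrightarrow>
     (\<forall>si sj. \<exists>pol n. measure_pmf.prob (traj P pol si n) {h. sj \<in> set h} > 0)"

text \<open>Optimal value with reward -1 per step: minus the minimum expected hitting time.\<close>
definition Vstar :: "('s, 'a) kernel \<Rightarrow> 's \<Rightarrow> 's \<Rightarrow> real" where
  "Vstar P s g = - enn2real (INF pol. hit_time P pol s g)"

end

theory Submission
  imports Defs
begin


lemma Vstar_nonpos: "Vstar P x y \<le> 0"
  by (simp add: Vstar_def enn2real_nonneg)

lemma subalg_vimage:
  assumes "f \<in> Q \<rightarrow>\<^sub>M count_space UNIV"
  shows "subalgebra Q (vimage_algebra (space Q) f (count_space UNIV))"
  unfolding subalgebra_def
proof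
  show "sets (vimage_algebra (space Q) f (count_space UNIV)) \<subseteq> sets Q"
  proof
    fix A assume "A \<in> sets (vimage_algebra (space Q) f (count_space UNIV))"
    then obtain B where "A = f -` B \<inter> space Q"
      using sets_vimage_algebra2[of f "space Q" "count_space UNIV"] by auto
    then show "A \<in> sets Q" using measurable_sets[OF assms, of B] by auto
  qed
qed simp

lemma integrable_fun_of:
  fixes V :: "'s::finite \<Rightarrow> real"
  assumes "prob_space Q" "f \<in> Q \<rightarrow>\<^sub>M count_space UNIV"
  shows "integrable Q (\<lambda>w. V (f w))"
proof -
  interpret prob_space Q by (rule assms(1))
  have m: "(\<lambda>w. V (f w)) \<in> borel_measurable Q"
    using assms(2) by (rule measurable_compose) simp
  have "\<And>w. norm (V (f w)) \<le> (\<Sum>x\<in>UNIV. \<bar>V x\<bar>)"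
    by (simp add: member_le_sum[where f="\<lambda>x. \<bar>V x\<bar>"])
  then show ?thesis
    by (intro integrable_const_bound[OF _ m]) auto
qed

theorem theorem3:
  fixes P :: "('s::finite, 'a::finite) kernel"
    and V\<omega> :: "'s \<Rightarrow> 's \<Rightarrow> real"
    and \<phi> :: "'s \<Rightarrow> 's \<Rightarrow> 's"
    and \<epsilon>V \<epsilon>\<psi> \<epsilon>\<pi> \<epsilon>drift :: real
    and s\<^sub>0 s\<^sub>g :: 's
    and M :: nat
    and Q :: "'w measure"
    and s :: "nat \<Rightarrow> 'w \<Rightarrow> 's"
    and C :: "nat \<Rightarrow> 'w \<Rightarrow> real"
  assumes comm: "communicating P"
    and eps_nonneg: "0 \<le> \<epsilon>V" "0 \<le> \<epsilon>\<psi>" "0 \<le> \<epsilon>\<pi>" "0 \<le> \<epsilon>drift"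
    and a: "\<forall>x y. \<bar>V\<omega> x y - Vstar P x y\<bar> \<le> \<epsilon>V"
    and b: "\<forall>x y. max 0 (V\<omega> x y - V\<omega> x (\<phi> x y) - V\<omega> (\<phi> x y) y) \<le> \<epsilon>\<psi>"
    and M_ge: "M \<ge> 1"
    and prob: "prob_space Q"
    and s_meas: "\<forall>k\<le>M. s k \<in> Q \<rightarrow>\<^sub>M count_space UNIV"
    and C_meas: "\<forall>k<M. C k \<in> borel_measurable Q"
    and C_nonneg: "\<forall>k<M. \<forall>\<omega>\<in>space Q. 0 \<le> C k \<omega>"
    and s0: "\<forall>\<omega>\<in>space Q. s 0 \<omega> = s\<^sub>0"
    and c: "\<forall>k<M. AE \<omega> in Q.
              real_cond_exp Q (vimage_algebra (space Q) (s k) (count_space UNIV)) (C k) \<omega>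
                \<le> - Vstar P (s k \<omega>) (\<phi> (s k \<omega>) s\<^sub>g) + \<epsilon>\<pi>"
    and d: "\<forall>k<M. AE \<omega> in Q.
              \<bar>real_cond_exp Q (vimage_algebra (space Q) (s k) (count_space UNIV))
                  (\<lambda>\<omega>'. Vstar P (s (Suc k) \<omega>') s\<^sub>g) \<omega>
                - Vstar P (\<phi> (s k \<omega>) s\<^sub>g) s\<^sub>g\<bar> \<le> \<epsilon>drift"
    and e: "AE \<omega> in Q. s M \<omega> = s\<^sub>g"
  shows "(\<integral>\<omega>. (\<Sum>k<M. C k \<omega>) \<partial>Q)
           \<le> - Vstar P s\<^sub>0 s\<^sub>g + real M * (\<epsilon>\<pi> + 3 * \<epsilon>V + \<epsilon>\<psi> + \<epsilon>drift)"
proof -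
  interpret prob_space Q by (rule prob)
  define F where "F k = vimage_algebra (space Q) (s k) (count_space UNIV)" for k
  define G where "G k w = Vstar P (s k w) s\<^sub>g" for k w
  define \<epsilon> where "\<epsilon> = \<epsilon>\<pi> + 3 * \<epsilon>V + \<epsilon>\<psi> + \<epsilon>drift"
  have eps0: "0 \<le> \<epsilon>" unfolding \<epsilon>_def using eps_nonneg by linarith
  have Gint: "integrable Q (G k)" if "k \<le> M" for k
    unfolding G_def apply (rule integrable_fun_of[OF prob]) using s_meas that by blast
  have sfs: "sigma_finite_subalgebra Q (F k)" if "k \<le> M" for k
    apply (rule finite_measure_subalgebra_is_sigma_finite)
    apply (rule finite_measure_subalgebra.intro[OF finite_measure_axioms])
    apply (rule finite_measure_subalgebra_axioms.intro)
    unfolding F_def using subalg_vimage s_meas that by blast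
  have tri: "- Vstar P x (\<phi> x s\<^sub>g) \<le> - Vstar P x s\<^sub>g + Vstar P (\<phi> x s\<^sub>g) s\<^sub>g + \<epsilon>\<psi> + 3 * \<epsilon>V" for x
  proof -
    have "V\<omega> x s\<^sub>g - V\<omega> x (\<phi> x s\<^sub>g) - V\<omega> (\<phi> x s\<^sub>g) s\<^sub>g \<le> \<epsilon>\<psi>"
      using b[rule_format, of x s\<^sub>g] by (simp only: max.bounded_iff)
    moreover have "\<bar>V\<omega> x s\<^sub>g - Vstar P x s\<^sub>g\<bar> \<le> \<epsilon>V" "\<bar>V\<omega> x (\<phi> x s\<^sub>g) - Vstar P x (\<phi> x s\<^sub>g)\<bar> \<le> \<epsilon>V"
      "\<bar>V\<omega> (\<phi> x s\<^sub>g) s\<^sub>g - Vstar P (\<phi> x s\<^sub>g) s\<^sub>g\<bar> \<le> \<epsilon>V" using a by blast+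
    ultimately show ?thesis unfolding abs_le_iff by linarith
  qed
  show ?thesis
  proof (cases "integrable Q (\<lambda>\<omega>. \<Sum>k<M. C k \<omega>)")
    case False
    then have "(\<integral>\<omega>. (\<Sum>k<M. C k \<omega>) \<partial>Q) = 0" by (rule not_integrable_integral_eq)
    moreover have "0 \<le> - Vstar P s\<^sub>0 s\<^sub>g" using Vstar_nonpos[of P s\<^sub>0 s\<^sub>g] by simp
    moreover have "0 \<le> real M * \<epsilon>" using eps0 by simp
    ultimately show ?thesis by (simp add: \<epsilon>_def)
  next
    case True
    have Cint: "integrable Q (C k)" if "k < M" for k
    proof (rule Bochner_Integration.integrable_bound[OF True])
      show "C k \<in> borel_measurable Q" using C_meas that by auto
      show "AE x in Q. norm (C k x) \<le> norm (\<Sum>k<M. C k x)"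
      proof (rule AE_I2)
        fix x assume x: "x \<in> space Q"
        have "C k x \<le> (\<Sum>k<M. C k x)"
          using that C_nonneg x by (intro member_le_sum) auto
        then show "norm (C k x) \<le> norm (\<Sum>k<M. C k x)" using C_nonneg x that by simp
      qed
    qed
    have step: "(\<integral>w. C k w \<partial>Q) \<le> (\<integral>w. G (Suc k) w \<partial>Q) - (\<integral>w. G k w \<partial>Q) + \<epsilon>" if k: "k < M" for k
    proof -
      interpret S: sigma_finite_subalgebra Q "F k" using sfs k by simp
      have ae: "AE w in Q. real_cond_exp Q (F k) (C k) w \<le> - G k w + real_cond_exp Q (F k) (G (Suc k)) w + \<epsilon>"
        using c[rule_format, OF k] d[rule_format, OF k]
      proof eventually_elim
        case (elim w)
        show ?case using elim tri[of "s k w"] unfolding F_def G_def \<epsilon>_def by (simp add: abs_le_iff)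
      qed
      have i1: "integrable Q (real_cond_exp Q (F k) (C k))" using S.real_cond_exp_int(1)[OF Cint[OF k]] .
      have i2: "integrable Q (real_cond_exp Q (F k) (G (Suc k)))" using S.real_cond_exp_int(1)[OF Gint] k by simp
      have "(\<integral>w. C k w \<partial>Q) = (\<integral>w. real_cond_exp Q (F k) (C k) w \<partial>Q)"
        using S.real_cond_exp_int(2)[OF Cint[OF k]] by simp
      also have "\<dots> \<le> (\<integral>w. (- G k w + real_cond_exp Q (F k) (G (Suc k)) w + \<epsilon>) \<partial>Q)"
        using i1 i2 Gint[of k] k ae by (intro integral_mono_AE) auto
      also have "\<dots> = - (\<integral>w. G k w \<partial>Q) + (\<integral>w. real_cond_exp Q (F k) (G (Suc k)) w \<partial>Q) + \<epsilon>"
        using i2 Gint[of k] k by (simp add: prob_space)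
      also have "(\<integral>w. real_cond_exp Q (F k) (G (Suc k)) w \<partial>Q) = (\<integral>w. G (Suc k) w \<partial>Q)"
        using S.real_cond_exp_int(2)[OF Gint] k by simp
      finally show ?thesis by simp
    qed
    have "(\<integral>\<omega>. (\<Sum>k<M. C k \<omega>) \<partial>Q) = (\<Sum>k<M. (\<integral>w. C k w \<partial>Q))"
      by (rule Bochner_Integration.integral_sum) (use Cint in auto)
    also have "\<dots> \<le> (\<Sum>k<M. (\<integral>w. G (Suc k) w \<partial>Q) - (\<integral>w. G k w \<partial>Q) + \<epsilon>)"
      using step by (intro sum_mono) auto
    also have "\<dots> = (\<integral>w. G M w \<partial>Q) - (\<integral>w. G 0 w \<partial>Q) + real M * \<epsilon>"
      by (simp add: sum.distrib sum_lessThan_telescope[of "\<lambda>k. (\<integral>w. G k w \<partial>Q)"])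
    also have "(\<integral>w. G 0 w \<partial>Q) = Vstar P s\<^sub>0 s\<^sub>g"
    proof -
      have "(\<integral>w. G 0 w \<partial>Q) = (\<integral>w. Vstar P s\<^sub>0 s\<^sub>g \<partial>Q)"
        using s0 by (intro Bochner_Integration.integral_cong) (auto simp: G_def)
      then show ?thesis by (simp add: prob_space)
    qed
    also have "(\<integral>w. G M w \<partial>Q) \<le> 0"
    proof -
      have "AE x in Q. Vstar P (s M x) s\<^sub>g \<le> 0" by (intro AE_I2 Vstar_nonpos)
      then show ?thesis using integral_nonneg_AE[of "\<lambda>w. - G M w" Q] by (simp add: G_def)
    qed
    finally show ?thesis by (simp add: \<epsilon>_def)
  qed
qed

end
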